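(* Let $H:\mathbb{R}^n\to\mathbb{R}$ be $\mu_H$-strongly convex with $\mu_H>0$, let $f^i_{j_i}:\mathbb{R}^n\to\mathbb{R}$ ($i\in[S]$, $j_i\in[I_i]$) be convex, and let $X\subset\mathbb{R}^n$ be nonempty, compact and convex. Let $m:=\sum_{i=1}^S I_i$, $F:=\sum_{i=1}^S\sum_{j_i=1}^{I_i} f^i_{j_i}$, and let $\{x_k\}_{k=1}^\infty$ be a sequence generated by FISM (described in the context) with positive stepsizes $\{\gamma_k\}_{k=1}^\infty$, $\{\lambda_k\}_{k=1}^\infty$. Suppose that $0<\gamma_k\lambda_k\mu_H\le 2m$ for all $k\ge 1$ and that $\{\lambda_k\}_{k=1}^\infty$ is nonincreasing. For each $k\ge1$ let $x^*_{\lambda_k}$ be the unique minimizer of $F+\lambda_k H$ over $X$. Then for all $k\ge 2$, $$\|x_{k+1}-x^*_{\lambda_k}\|^2\le\Big(1-\frac{\gamma_k\lambda_k\mu_H}{2m}\Big)\|x_k-x^*_{\lambda_{k-1}}\|^2+\frac{4mC_H^2}{\gamma_k\lambda_k\mu_H^3}\Big(1-\frac{\lambda_{k-1}}{\lambda_k}\Big)^2+\gamma_k^2 C,$$ where $C:=4m^3\Big(C_f^2+\frac{2\lambda_1^2C_H^2}{m^2}\Big)+2C_fm^2\Big(C_f+\frac{\lambda_1C_H}{m}\Big)$.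
   Context: Notation: $[s]:=\{1,\dots,s\}$; $P_X$ is the Euclidean metric projection onto $X$; $\partial$ denotes the convex subdifferential. Constants: $C_f>0$ is a constant such that for all $i\in[S]$, $j_i\in[I_i]$ and all $x,y\in X$, every $g\in\partial f^i_{j_i}(x)$ satisfies $\|g\|\le C_f$ and $|f^i_{j_i}(x)-f^i_{j_i}(y)|\le C_f\|x-y\|$; $C_H>0$ is a constant such that for all $x,y\in X$, every $g\in\partial H(x)$ satisfies $\|g\|\le C_H$, $|H(x)-H(y)|\le C_H\|x-y\|$ and $|H(x)|\le C_H$ (such constants exist by compactness of $X$). FISM (Federated Incremental Subgradient Method): given a starting point $x_1\in\mathbb{R}^n$ and positive stepsizes $\{\gamma_k\},\{\lambda_k\}$, for $k=1,2,\dots$: pick $\mathcal{H}_k\in\partial H(x_k)$; for every client $i\in[S]$ set $x^i_{k,1}=x_k$ and for $j_i=1,\dots,I_i$ pick $g^i_{k,j_i}\in\partial f^i_{j_i}(x^i_{k,j_i})$ and set $x^i_{k,j_i+1}=P_X\big[x^i_{k,j_i}-\gamma_k g^i_{k,j_i}-\frac{\gamma_k\lambda_k}{m}\mathcal{H}_k\big]$; then set $x^i_k=x^i_{k,I_i+1}$ and $x_{k+1}=\frac1S\sum_{i=1}^S x^i_k$. *)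

theory Defs
  imports "HOL-Analysis.Analysis"
begin

definition subdiff :: "('a::real_inner \<Rightarrow> real) \<Rightarrow> 'a \<Rightarrow> 'a set" where
  "subdiff h x = {g. \<forall>y. h y \<ge> h x + inner g (y - x)}"

definition strongly_convex :: "real \<Rightarrow> ('a::real_normed_vector \<Rightarrow> real) \<Rightarrow> bool" where
  "strongly_convex mu h \<longleftrightarrow>
     (\<forall>x y t. 0 \<le> t \<and> t \<le> 1 \<longrightarrow>
        h (t *\<^sub>R x + (1 - t) *\<^sub>R y)
          \<le> t * h x + (1 - t) * h y - mu / 2 * t * (1 - t) * (norm (x - y))\<^sup>2)"

abbreviation proj :: "'a::euclidean_space set \<Rightarrow> 'a \<Rightarrow> 'a" where
  "proj X y \<equiv> closest_point X y"

end

theory Submission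
  imports Defs
begin

lemma lim0:
  fixes A B c :: real
  assumes c: "c \<ge> 0" and h: "\<forall>t. 0 < t \<and> t \<le> 1 \<longrightarrow> A \<le> B + t * c"
  shows "A \<le> B"
proof (rule ccontr)
  assume "\<not> A \<le> B"
  hence AB: "A - B > 0" by simp
  define t where "t = min 1 ((A - B) / (c + 1))"
  have t0: "t > 0" using AB c unfolding t_def by simp
  have t1: "t \<le> 1" unfolding t_def by simp
  have "t * c \<le> (A - B) / (c + 1) * c" using c unfolding t_def
    by (intro mult_right_mono) auto
  also have "\<dots> < A - B" using AB c by (simp add: field_simps)
  finally have "t * c < A - B" .
  with h t0 t1 show False by force
qed

lemma aux_eq: "mu / 2 * (1 - t) * n = mu / 2 * n - t * (mu / 2 * n)" for mu t n :: real
  by (simp add: field_simps)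

lemma sc_subgrad:
  fixes h :: "'a::real_inner \<Rightarrow> real"
  assumes sc: "strongly_convex mu h" and mu: "mu \<ge> 0" and g: "g \<in> subdiff h x"
  shows "h x + inner g (y - x) + mu / 2 * (norm (y - x))\<^sup>2 \<le> h y"
proof (rule lim0[where c = "mu / 2 * (norm (y - x))\<^sup>2"])
  show "0 \<le> mu / 2 * (norm (y - x))\<^sup>2" using mu by simp
  show "\<forall>t. 0 < t \<and> t \<le> 1 \<longrightarrow> h x + inner g (y - x) + mu / 2 * (norm (y - x))\<^sup>2
          \<le> h y + t * (mu / 2 * (norm (y - x))\<^sup>2)"
  proof (intro allI impI)
    fix t :: real assume t: "0 < t \<and> t \<le> 1"
    define z where "z = t *\<^sub>R y + (1 - t) *\<^sub>R x"
    have zx: "z - x = t *\<^sub>R (y - x)" unfolding z_def by (simp add: algebra_simps)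
    have "h z \<ge> h x + inner g (z - x)" using g unfolding subdiff_def by blast
    hence lo: "h z \<ge> h x + t * inner g (y - x)" using zx by simp
    have hi: "h z \<le> t * h y + (1 - t) * h x - mu / 2 * t * (1 - t) * (norm (y - x))\<^sup>2"
      using sc[unfolded strongly_convex_def, rule_format, of t y x] t unfolding z_def by simp
    have "t * (inner g (y - x)) \<le> t * (h y - h x - mu / 2 * (1 - t) * (norm (y - x))\<^sup>2)"
      using lo hi by (simp add: algebra_simps)
    hence "inner g (y - x) \<le> h y - h x - mu / 2 * (1 - t) * (norm (y - x))\<^sup>2"
      using t by simp
    thus "h x + inner g (y - x) + mu / 2 * (norm (y - x))\<^sup>2
          \<le> h y + t * (mu / 2 * (norm (y - x))\<^sup>2)" using aux_eq[of mu t "(norm (y - x))\<^sup>2"] by linarith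
  qed
qed

lemma growth:
  fixes \<Phi> :: "'a::real_normed_vector \<Rightarrow> real"
  assumes X: "convex X" and y0: "y0 \<in> X" and u: "u \<in> X" and mu: "mu \<ge> 0"
    and mn: "\<forall>v\<in>X. \<Phi> y0 \<le> \<Phi> v"
    and sc: "\<forall>t. 0 \<le> t \<and> t \<le> 1 \<longrightarrow> \<Phi> (t *\<^sub>R u + (1 - t) *\<^sub>R y0)
               \<le> t * \<Phi> u + (1 - t) * \<Phi> y0 - mu / 2 * t * (1 - t) * (norm (u - y0))\<^sup>2"
  shows "\<Phi> y0 + mu / 2 * (norm (u - y0))\<^sup>2 \<le> \<Phi> u"
proof (rule lim0[where c = "mu / 2 * (norm (u - y0))\<^sup>2"])
  show "0 \<le> mu / 2 * (norm (u - y0))\<^sup>2" using mu by simp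
  show "\<forall>t. 0 < t \<and> t \<le> 1 \<longrightarrow> \<Phi> y0 + mu / 2 * (norm (u - y0))\<^sup>2
          \<le> \<Phi> u + t * (mu / 2 * (norm (u - y0))\<^sup>2)"
  proof (intro allI impI)
    fix t :: real assume t: "0 < t \<and> t \<le> 1"
    have "t *\<^sub>R u + (1 - t) *\<^sub>R y0 \<in> X" using X y0 u t by (simp add: convex_def)
    hence "\<Phi> y0 \<le> \<Phi> (t *\<^sub>R u + (1 - t) *\<^sub>R y0)" using mn by blast
    also have "\<dots> \<le> t * \<Phi> u + (1 - t) * \<Phi> y0 - mu / 2 * t * (1 - t) * (norm (u - y0))\<^sup>2"
      using sc t by simp
    finally have "t * (\<Phi> y0 + mu / 2 * (1 - t) * (norm (u - y0))\<^sup>2) \<le> t * \<Phi> u"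
      by (simp add: algebra_simps)
    hence "\<Phi> y0 + mu / 2 * (1 - t) * (norm (u - y0))\<^sup>2 \<le> \<Phi> u" using t by simp
    moreover have "mu / 2 * (1 - t) * (norm (u - y0))\<^sup>2 = mu / 2 * (norm (u - y0))\<^sup>2 - t * (mu / 2 * (norm (u - y0))\<^sup>2)"
      by (rule aux_eq)
    ultimately show "\<Phi> y0 + mu / 2 * (norm (u - y0))\<^sup>2 \<le> \<Phi> u + t * (mu / 2 * (norm (u - y0))\<^sup>2)"
      by linarith
  qed
qed

lemma sq_split:
  fixes p q a :: real
  assumes "a > 0"
  shows "(p + q)\<^sup>2 \<le> (1 + a) * p\<^sup>2 + (1 + 1 / a) * q\<^sup>2"
proof -
  have "0 \<le> (a * p - q)\<^sup>2 / a" using assms by simp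
  also have "(a * p - q)\<^sup>2 / a = a * p\<^sup>2 + q\<^sup>2 / a - 2 * p * q"
    using assms by (simp add: power2_eq_square field_simps)
  finally show ?thesis using assms by (simp add: power2_eq_square field_simps)
qed

lemma norm_diff_sq:
  fixes a v :: "'a::real_inner"
  shows "(norm (a - c *\<^sub>R v))\<^sup>2 = (norm a)\<^sup>2 - 2 * c * inner v a + c\<^sup>2 * (norm v)\<^sup>2"
  unfolding power2_norm_eq_inner
  by (simp add: inner_diff_left inner_diff_right inner_commute algebra_simps power2_eq_square)

lemma client:
  fixes X :: "'a::euclidean_space set" and xs gs :: "nat \<Rightarrow> 'a" and fs :: "nat \<Rightarrow> 'a \<Rightarrow> real"
  assumes Xc: "convex X" and Xcl: "closed X" and Xne: "X \<noteq> {}" and x0: "x0 \<in> X" and y: "y \<in> X"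
    and init: "xs 1 = x0"
    and step: "\<forall>j\<in>{1..n}. xs (j + 1) = proj X (xs j - gam *\<^sub>R gs j - (gam * b) *\<^sub>R h)"
    and sub: "\<forall>j\<in>{1..n}. gs j \<in> subdiff (fs j) (xs j)"
    and gbd: "\<forall>j\<in>{1..n}. \<forall>u\<in>X. \<forall>s\<in>subdiff (fs j) u. norm s \<le> Cf"
    and lip: "\<forall>j\<in>{1..n}. \<forall>u\<in>X. \<forall>v\<in>X. \<bar>fs j u - fs j v\<bar> \<le> Cf * norm (u - v)"
    and hn: "norm h \<le> CH" and Q: "Q \<le> inner h (x0 - y)"
    and gam: "gam > 0" and b: "b \<ge> 0" and Cf: "Cf \<ge> 0" and CH: "CH \<ge> 0"
  shows "\<forall>d\<le>n. xs (Suc d) \<in> X \<and> norm (xs (Suc d) - x0) \<le> real d * gam * (Cf + b * CH)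
     \<and> (norm (xs (Suc d) - y))\<^sup>2 \<le> (norm (x0 - y))\<^sup>2 - 2 * gam * (\<Sum>l=1..d. fs l x0 - fs l y)
          - 2 * gam * b * real d * Q + gam\<^sup>2 * (real d)\<^sup>2 * (Cf + b * CH)\<^sup>2"
proof (intro allI)
  fix d show "d \<le> n \<longrightarrow> xs (Suc d) \<in> X \<and> norm (xs (Suc d) - x0) \<le> real d * gam * (Cf + b * CH)
     \<and> (norm (xs (Suc d) - y))\<^sup>2 \<le> (norm (x0 - y))\<^sup>2 - 2 * gam * (\<Sum>l=1..d. fs l x0 - fs l y)
          - 2 * gam * b * real d * Q + gam\<^sup>2 * (real d)\<^sup>2 * (Cf + b * CH)\<^sup>2"
  proof (induction d)
    case 0
    show ?case using init x0 by simp
  next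
    case (Suc d)
    show ?case
    proof
      assume dn: "Suc d \<le> n"
      define j where "j = Suc d"
      define D where "D = Cf + b * CH"
      define v where "v = gs j + b *\<^sub>R h"
      define z where "z = xs j - gam *\<^sub>R v"
      have jn: "j \<in> {1..n}" using dn unfolding j_def by simp
      have IH: "xs j \<in> X" "norm (xs j - x0) \<le> real d * gam * D"
        "(norm (xs j - y))\<^sup>2 \<le> (norm (x0 - y))\<^sup>2 - 2 * gam * (\<Sum>l=1..d. fs l x0 - fs l y)
          - 2 * gam * b * real d * Q + gam\<^sup>2 * (real d)\<^sup>2 * D\<^sup>2"
        using Suc dn unfolding j_def D_def by auto
      have xj1: "xs (Suc j) = proj X z"
        using step jn unfolding z_def v_def by (simp add: algebra_simps scaleR_add_right)
      have gj: "norm (gs j) \<le> Cf" using gbd sub jn IH(1) by blast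
      have vn: "norm v \<le> D"
      proof -
        have "norm v \<le> norm (gs j) + norm (b *\<^sub>R h)" unfolding v_def by (rule norm_triangle_ineq)
        also have "norm (b *\<^sub>R h) \<le> b * CH" using b hn by (simp add: mult_left_mono)
        finally show ?thesis using gj unfolding D_def by simp
      qed
      have D0: "D \<ge> 0" using Cf CH b unfolding D_def by simp
      have PX: "proj X z \<in> X" using Xcl Xne by (rule closest_point_in_set)
      have Py: "norm (proj X z - y) \<le> norm (z - y)"
        using closest_point_lipschitz[OF Xc Xcl Xne, of z y] closest_point_self[OF y]
        by (simp add: dist_norm)
      have Pj: "norm (proj X z - xs j) \<le> norm (z - xs j)"
        using closest_point_lipschitz[OF Xc Xcl Xne, of z "xs j"] closest_point_self[OF IH(1)]
        by (simp add: dist_norm)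
      have zj: "norm (z - xs j) = gam * norm v" unfolding z_def using gam by simp
      have "gam * norm v \<le> gam * D" using vn gam by simp
      hence Pj2: "norm (proj X z - xs j) \<le> gam * D" using Pj zj by simp
      have "norm (proj X z - x0) \<le> norm (proj X z - xs j) + norm (xs j - x0)"
        using norm_triangle_ineq[of "proj X z - xs j" "xs j - x0"] by simp
      also have "\<dots> \<le> gam * D + real d * gam * D" using Pj2 IH(2) by simp
      also have "\<dots> = real (Suc d) * gam * D" by (simp add: algebra_simps)
      finally have dist2: "norm (proj X z - x0) \<le> real (Suc d) * gam * D" .
      define e where "e = norm (xs j - x0)"
      have e0: "e \<ge> 0" unfolding e_def by simp
      have sg: "fs j y \<ge> fs j (xs j) + inner (gs j) (y - xs j)"
        using sub jn unfolding subdiff_def by blast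
      have "inner (gs j) (y - xs j) = - inner (gs j) (xs j - y)"
        by (metis inner_minus_right minus_diff_eq)
      hence i1: "inner (gs j) (xs j - y) \<ge> fs j (xs j) - fs j y" using sg by simp
      have "\<bar>fs j (xs j) - fs j x0\<bar> \<le> Cf * e" using lip jn IH(1) x0 unfolding e_def by blast
      hence i2: "fs j (xs j) \<ge> fs j x0 - Cf * e" by linarith
      have i3: "inner h (xs j - y) = inner h (x0 - y) + inner h (xs j - x0)"
        by (simp add: inner_diff_right)
      have "\<bar>inner h (xs j - x0)\<bar> \<le> norm h * e" unfolding e_def by (rule Cauchy_Schwarz_ineq2)
      also have "\<dots> \<le> CH * e" using hn e0 by (simp add: mult_right_mono)
      finally have i4: "inner h (xs j - y) \<ge> Q - CH * e" using i3 Q by linarith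
      have "b * inner h (xs j - y) \<ge> b * (Q - CH * e)" using i4 b by (simp add: mult_left_mono)
      hence iv: "inner v (xs j - y) \<ge> (fs j x0 - fs j y) + b * Q - D * e"
        using i1 i2 unfolding v_def D_def by (simp add: inner_add_left algebra_simps)
      have "D * e \<le> D * (real d * gam * D)" using IH(2) D0 unfolding e_def by (simp add: mult_left_mono)
      hence iv2: "inner v (xs j - y) \<ge> (fs j x0 - fs j y) + b * Q - real d * gam * D\<^sup>2"
        using iv by (simp add: power2_eq_square algebra_simps)
      have zy: "(norm (z - y))\<^sup>2 = (norm (xs j - y))\<^sup>2 - 2 * gam * inner v (xs j - y) + gam\<^sup>2 * (norm v)\<^sup>2"
      proof -
        have "z - y = (xs j - y) - gam *\<^sub>R v" unfolding z_def by simp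
        thus ?thesis using norm_diff_sq[of "xs j - y" gam v] by (metis inner_commute)
      qed
      have vv: "gam\<^sup>2 * (norm v)\<^sup>2 \<le> gam\<^sup>2 * D\<^sup>2"
        using vn by (intro mult_left_mono power_mono) auto
      have ivg: "2 * gam * inner v (xs j - y) \<ge> 2 * gam * ((fs j x0 - fs j y) + b * Q - real d * gam * D\<^sup>2)"
        using iv2 gam by simp
      have "(norm (proj X z - y))\<^sup>2 \<le> (norm (z - y))\<^sup>2" using Py by (simp add: power_mono)
      also have "\<dots> \<le> (norm (x0 - y))\<^sup>2 - 2 * gam * (\<Sum>l=1..d. fs l x0 - fs l y)
          - 2 * gam * b * real d * Q + gam\<^sup>2 * (real d)\<^sup>2 * D\<^sup>2
          - 2 * gam * ((fs j x0 - fs j y) + b * Q - real d * gam * D\<^sup>2) + gam\<^sup>2 * D\<^sup>2"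
        using zy IH(3) vv ivg by linarith
      also have "\<dots> = (norm (x0 - y))\<^sup>2 - 2 * gam * (\<Sum>l=1..Suc d. fs l x0 - fs l y)
          - 2 * gam * b * real (Suc d) * Q + gam\<^sup>2 * (real (Suc d))\<^sup>2 * D\<^sup>2"
        unfolding j_def by (simp add: power2_eq_square algebra_simps)
      finally show "xs (Suc (Suc d)) \<in> X \<and> norm (xs (Suc (Suc d)) - x0) \<le> real (Suc d) * gam * (Cf + b * CH)
     \<and> (norm (xs (Suc (Suc d)) - y))\<^sup>2 \<le> (norm (x0 - y))\<^sup>2 - 2 * gam * (\<Sum>l=1..Suc d. fs l x0 - fs l y)
          - 2 * gam * b * real (Suc d) * Q + gam\<^sup>2 * (real (Suc d))\<^sup>2 * (Cf + b * CH)\<^sup>2"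
        using PX dist2 xj1 unfolding j_def D_def by simp
    qed
  qed
qed

lemma F_conv:
  fixes f :: "nat \<Rightarrow> nat \<Rightarrow> 'a::real_vector \<Rightarrow> real"
  assumes cv: "\<forall>i\<in>{1..S}. \<forall>j\<in>{1..I i}. convex_on UNIV (f i j)" and t: "0 \<le> t" "t \<le> 1"
  shows "(\<Sum>i=1..S. \<Sum>j=1..I i. f i j (t *\<^sub>R u + (1 - t) *\<^sub>R v))
     \<le> t * (\<Sum>i=1..S. \<Sum>j=1..I i. f i j u) + (1 - t) * (\<Sum>i=1..S. \<Sum>j=1..I i. f i j v)"
proof -
  have "(\<Sum>i=1..S. \<Sum>j=1..I i. f i j (t *\<^sub>R u + (1 - t) *\<^sub>R v))
     \<le> (\<Sum>i=1..S. \<Sum>j=1..I i. t * f i j u + (1 - t) * f i j v)"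
  proof (intro sum_mono)
    fix i j assume "i \<in> {1..S}" "j \<in> {1..I i}"
    hence "convex_on UNIV (f i j)" using cv by blast
    from convex_onD[OF this, of t v u] t
    show "f i j (t *\<^sub>R u + (1 - t) *\<^sub>R v) \<le> t * f i j u + (1 - t) * f i j v"
      by (simp add: add.commute)
  qed
  also have "\<dots> = t * (\<Sum>i=1..S. \<Sum>j=1..I i. f i j u) + (1 - t) * (\<Sum>i=1..S. \<Sum>j=1..I i. f i j v)"
    by (simp add: sum.distrib sum_distrib_left)
  finally show ?thesis .
qed

lemma phi_growth:
  fixes H F :: "'a::real_normed_vector \<Rightarrow> real"
  assumes X: "convex X" and y0: "y0 \<in> X" and u: "u \<in> X" and lam: "lam \<ge> 0" and mu: "mu \<ge> 0"
    and sc: "strongly_convex mu H"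
    and Fc: "\<forall>t. 0 \<le> t \<and> t \<le> 1 \<longrightarrow> F (t *\<^sub>R u + (1 - t) *\<^sub>R y0) \<le> t * F u + (1 - t) * F y0"
    and mn: "\<forall>v\<in>X. F y0 + lam * H y0 \<le> F v + lam * H v"
  shows "F y0 + lam * H y0 + lam * mu / 2 * (norm (u - y0))\<^sup>2 \<le> F u + lam * H u"
proof -
  have "(\<lambda>z. F z + lam * H z) y0 + (lam * mu) / 2 * (norm (u - y0))\<^sup>2 \<le> (\<lambda>z. F z + lam * H z) u"
  proof (rule growth[OF X y0 u])
    show "0 \<le> lam * mu" using lam mu by simp
    show "\<forall>v\<in>X. F y0 + lam * H y0 \<le> F v + lam * H v" using mn by blast
    show "\<forall>t. 0 \<le> t \<and> t \<le> 1 \<longrightarrow>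
         F (t *\<^sub>R u + (1 - t) *\<^sub>R y0) + lam * H (t *\<^sub>R u + (1 - t) *\<^sub>R y0)
         \<le> t * (F u + lam * H u) + (1 - t) * (F y0 + lam * H y0) -
            lam * mu / 2 * t * (1 - t) * (norm (u - y0))\<^sup>2"
    proof (intro allI impI)
      fix t :: real assume t: "0 \<le> t \<and> t \<le> 1"
      have h1: "H (t *\<^sub>R u + (1 - t) *\<^sub>R y0) \<le> t * H u + (1 - t) * H y0 - mu / 2 * t * (1 - t) * (norm (u - y0))\<^sup>2"
        using sc[unfolded strongly_convex_def, rule_format, of t u y0] t by simp
      have "lam * H (t *\<^sub>R u + (1 - t) *\<^sub>R y0) \<le> lam * (t * H u + (1 - t) * H y0 - mu / 2 * t * (1 - t) * (norm (u - y0))\<^sup>2)"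
        by (rule mult_left_mono[OF h1 lam])
      moreover have "F (t *\<^sub>R u + (1 - t) *\<^sub>R y0) \<le> t * F u + (1 - t) * F y0" using Fc t by blast
      ultimately show "F (t *\<^sub>R u + (1 - t) *\<^sub>R y0) + lam * H (t *\<^sub>R u + (1 - t) *\<^sub>R y0)
         \<le> t * (F u + lam * H u) + (1 - t) * (F y0 + lam * H y0) -
            lam * mu / 2 * t * (1 - t) * (norm (u - y0))\<^sup>2"
        by (simp add: algebra_simps)
    qed
  qed
  thus ?thesis by simp
qed

lemma lam_le1:
  fixes l :: "nat \<Rightarrow> real"
  assumes "\<forall>k\<ge>1. l (Suc k) \<le> l k" and "k \<ge> 1"
  shows "l k \<le> l 1"
  using assms(2)
proof (induction k)
  case 0 thus ?case by simp
next
  case (Suc k)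
  show ?case
  proof (cases "k = 0")
    case True thus ?thesis by simp
  next
    case False
    hence "l (Suc k) \<le> l k" using assms(1) by simp
    thus ?thesis using Suc False by simp
  qed
qed

lemma avg_sq:
  fixes v :: "nat \<Rightarrow> 'a::real_normed_vector"
  assumes S: "S \<ge> 1"
  shows "(norm ((1 / real S) *\<^sub>R (\<Sum>i=1..S. v i) - y))\<^sup>2 \<le> (\<Sum>i=1..S. (norm (v i - y))\<^sup>2) / real S"
proof -
  have cS: "card {1..S} = S" by simp
  have "(1 / real S) *\<^sub>R (\<Sum>i=1..S. v i) - y = (1 / real S) *\<^sub>R (\<Sum>i=1..S. v i - y)"
  proof -
    have "(\<Sum>i=1..S. y) = real S *\<^sub>R y" by (simp add: sum_constant_scaleR)
    hence "(1 / real S) *\<^sub>R (\<Sum>i=1..S. y) = y" using S by simp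
    thus ?thesis by (simp add: sum_subtractf scaleR_diff_right)
  qed
  hence "norm ((1 / real S) *\<^sub>R (\<Sum>i=1..S. v i) - y) = (1 / real S) * norm (\<Sum>i=1..S. v i - y)"
    by simp
  also have "\<dots> \<le> (1 / real S) * (\<Sum>i=1..S. norm (v i - y))"
    by (intro mult_left_mono norm_sum) auto
  finally have n1: "norm ((1 / real S) *\<^sub>R (\<Sum>i=1..S. v i) - y) \<le> (1 / real S) * (\<Sum>i=1..S. norm (v i - y))" .
  have "(norm ((1 / real S) *\<^sub>R (\<Sum>i=1..S. v i) - y))\<^sup>2 \<le> ((1 / real S) * (\<Sum>i=1..S. norm (v i - y)))\<^sup>2"
    using n1 by (intro power_mono) auto
  also have "\<dots> = (\<Sum>i=1..S. norm (v i - y))\<^sup>2 / (real S)\<^sup>2" by (simp add: power_divide)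
  also have "\<dots> \<le> ((\<Sum>i=1..S. (norm (v i - y))\<^sup>2) * real S) / (real S)\<^sup>2"
    using sum_squared_le_sum_of_squares[of "\<lambda>i. norm (v i - y)" "{1..S}"] cS
    by (intro divide_right_mono) auto
  also have "\<dots> = (\<Sum>i=1..S. (norm (v i - y))\<^sup>2) / real S" using S by (simp add: power2_eq_square)
  finally show ?thesis .
qed

theorem lemma2:
  fixes H :: "'a::euclidean_space \<Rightarrow> real"
    and f :: "nat \<Rightarrow> nat \<Rightarrow> 'a \<Rightarrow> real"
    and S :: nat and I :: "nat \<Rightarrow> nat"
    and X :: "'a set"
    and muH Cf CH :: real
    and gamma lambda :: "nat \<Rightarrow> real"
    and x :: "nat \<Rightarrow> 'a"
    and Hs :: "nat \<Rightarrow> 'a"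
    and xc :: "nat \<Rightarrow> nat \<Rightarrow> nat \<Rightarrow> 'a"
    and g :: "nat \<Rightarrow> nat \<Rightarrow> nat \<Rightarrow> 'a"
    and xstar :: "nat \<Rightarrow> 'a"
  defines "m \<equiv> (\<Sum>i=1..S. I i)"
    and "F \<equiv> (\<lambda>z. \<Sum>i=1..S. \<Sum>j=1..I i. f i j z)"
  assumes S_pos: "S \<ge> 1" and I_pos: "\<forall>i\<in>{1..S}. I i \<ge> 1"
    and muH_pos: "muH > 0" and H_sc: "strongly_convex muH H"
    and f_conv: "\<forall>i\<in>{1..S}. \<forall>j\<in>{1..I i}. convex_on UNIV (f i j)"
    and X_ne: "X \<noteq> {}" and X_cpt: "compact X" and X_cvx: "convex X"
    and Cf_pos: "Cf > 0"
    and Cf_bd: "\<forall>i\<in>{1..S}. \<forall>j\<in>{1..I i}. \<forall>u\<in>X. \<forall>v\<in>X.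
                  (\<forall>s\<in>subdiff (f i j) u. norm s \<le> Cf) \<and> \<bar>f i j u - f i j v\<bar> \<le> Cf * norm (u - v)"
    and CH_pos: "CH > 0"
    and CH_bd: "\<forall>u\<in>X. \<forall>v\<in>X. (\<forall>s\<in>subdiff H u. norm s \<le> CH)
                  \<and> \<bar>H u - H v\<bar> \<le> CH * norm (u - v) \<and> \<bar>H u\<bar> \<le> CH"
    and gamma_pos: "\<forall>k\<ge>1. gamma k > 0" and lambda_pos: "\<forall>k\<ge>1. lambda k > 0"
    and step_bd: "\<forall>k\<ge>1. 0 < gamma k * lambda k * muH \<and> gamma k * lambda k * muH \<le> 2 * real m"
    and lambda_noninc: "\<forall>k\<ge>1. lambda (Suc k) \<le> lambda k"
    and FISM_H: "\<forall>k\<ge>1. Hs k \<in> subdiff H (x k)"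
    and FISM_init: "\<forall>k\<ge>1. \<forall>i\<in>{1..S}. xc k i 1 = x k"
    and FISM_g: "\<forall>k\<ge>1. \<forall>i\<in>{1..S}. \<forall>j\<in>{1..I i}. g k i j \<in> subdiff (f i j) (xc k i j)"
    and FISM_step: "\<forall>k\<ge>1. \<forall>i\<in>{1..S}. \<forall>j\<in>{1..I i}.
                      xc k i (j + 1) = proj X (xc k i j - gamma k *\<^sub>R g k i j
                                         - (gamma k * lambda k / real m) *\<^sub>R Hs k)"
    and FISM_avg: "\<forall>k\<ge>1. x (k + 1) = (1 / real S) *\<^sub>R (\<Sum>i=1..S. xc k i (I i + 1))"
    and xstar_min: "\<forall>k\<ge>1. xstar k \<in> X \<and>
                      (\<forall>y\<in>X. F (xstar k) + lambda k * H (xstar k) \<le> F y + lambda k * H y)"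
  shows "\<forall>k\<ge>2.
     (norm (x (k + 1) - xstar k))\<^sup>2
       \<le> (1 - gamma k * lambda k * muH / (2 * real m)) * (norm (x k - xstar (k - 1)))\<^sup>2
         + 4 * real m * CH\<^sup>2 / (gamma k * lambda k * muH ^ 3) * (1 - lambda (k - 1) / lambda k)\<^sup>2
         + (gamma k)\<^sup>2 * (4 * real m ^ 3 * (Cf\<^sup>2 + 2 * (lambda 1)\<^sup>2 * CH\<^sup>2 / (real m)\<^sup>2)
                          + 2 * Cf * (real m)\<^sup>2 * (Cf + lambda 1 * CH / real m))"
proof (intro allI impI)
  fix k :: nat assume k2: "k \<ge> 2"
  define gam where "gam = gamma k"
  define lam where "lam = lambda k"
  define lam' where "lam' = lambda (k - 1)"
  define y where "y = xstar k"
  define y' where "y' = xstar (k - 1)"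
  define b where "b = lam / real m"
  define D where "D = Cf + b * CH"
  have k1: "k \<ge> 1" and km1: "k - 1 \<ge> 1" using k2 by auto
  have kk: "Suc (k - 1) = k" using k2 by simp
  have gam0: "gam > 0" using gamma_pos k1 unfolding gam_def by simp
  have lam0: "lam > 0" using lambda_pos k1 unfolding lam_def by simp
  have lam'0: "lam' > 0" using lambda_pos km1 unfolding lam'_def by simp
  have lamlam': "lam \<le> lam'" using lambda_noninc km1 kk unfolding lam_def lam'_def by metis
  have lam1: "lam \<le> lambda 1" using lam_le1[OF lambda_noninc k1] unfolding lam_def .
  have Xcl: "closed X" using X_cpt by (rule compact_imp_closed)
  have mS: "real S \<le> real m"
  proof -
    have "(\<Sum>i=1..S. (1::nat)) \<le> (\<Sum>i=1..S. I i)" using I_pos by (intro sum_mono) auto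
    hence "S \<le> m" unfolding m_def by simp
    thus ?thesis by simp
  qed
  have S1: "real S \<ge> 1" using S_pos by simp
  have m1: "real m \<ge> 1" using mS S1 by linarith
  have b0: "b \<ge> 0" unfolding b_def using lam0 m1 by simp
  have D0: "D \<ge> 0" unfolding D_def using b0 Cf_pos CH_pos by simp
  have ystar: "y \<in> X" "\<forall>v\<in>X. F y + lam * H y \<le> F v + lam * H v"
    using xstar_min k1 unfolding y_def lam_def by auto
  have ystar': "y' \<in> X" "\<forall>v\<in>X. F y' + lam' * H y' \<le> F v + lam' * H v"
    using xstar_min km1 unfolding y'_def lam'_def by auto
  have xkX: "x k \<in> X"
  proof -
    have xk: "x k = (1 / real S) *\<^sub>R (\<Sum>i=1..S. xc (k - 1) i (I i + 1))"
      using FISM_avg km1 kk by (metis Suc_eq_plus1)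
    have "\<forall>i\<in>{1..S}. xc (k - 1) i (I i + 1) \<in> X"
    proof
      fix i assume i: "i \<in> {1..S}"
      hence "I i \<in> {1..I i}" using I_pos by simp
      hence "xc (k - 1) i (I i + 1) = proj X (xc (k - 1) i (I i) - gamma (k - 1) *\<^sub>R g (k - 1) i (I i)
               - (gamma (k - 1) * lambda (k - 1) / real m) *\<^sub>R Hs (k - 1))"
        using FISM_step km1 i by blast
      thus "xc (k - 1) i (I i + 1) \<in> X" using closest_point_in_set[OF Xcl X_ne] by simp
    qed
    hence "(\<Sum>i\<in>{1..S}. (1 / real S) *\<^sub>R xc (k - 1) i (I i + 1)) \<in> X"
      using S_pos by (intro convex_sum[OF _ X_cvx]) auto
    thus ?thesis unfolding xk by (simp add: scaleR_sum_right)
  qed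
  have Hsn: "norm (Hs k) \<le> CH" using CH_bd xkX FISM_H k1 by blast
  define r where "r = (norm (x k - y))\<^sup>2"
  define Q where "Q = H (x k) - H y + muH / 2 * r"
  have Qle: "Q \<le> inner (Hs k) (x k - y)"
  proof -
    have "H (x k) + inner (Hs k) (y - x k) + muH / 2 * (norm (y - x k))\<^sup>2 \<le> H y"
      using sc_subgrad[OF H_sc _ ] FISM_H k1 muH_pos by simp
    moreover have "inner (Hs k) (y - x k) = - inner (Hs k) (x k - y)"
      by (metis inner_minus_right minus_diff_eq)
    ultimately show ?thesis unfolding Q_def r_def by (simp add: norm_minus_commute)
  qed
  define A where "A = (\<lambda>i. \<Sum>l=1..I i. f i l (x k) - f i l y)"
  have client_i: "\<forall>i\<in>{1..S}. (norm (xc k i (I i + 1) - y))\<^sup>2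
      \<le> r - 2 * gam * A i - 2 * gam * b * real (I i) * Q + gam\<^sup>2 * (real (I i))\<^sup>2 * D\<^sup>2"
  proof
    fix i assume i: "i \<in> {1..S}"
    have "\<forall>d\<le>I i. xc k i (Suc d) \<in> X \<and> norm (xc k i (Suc d) - x k) \<le> real d * gam * (Cf + b * CH)
     \<and> (norm (xc k i (Suc d) - y))\<^sup>2 \<le> (norm (x k - y))\<^sup>2 - 2 * gam * (\<Sum>l=1..d. f i l (x k) - f i l y)
          - 2 * gam * b * real d * Q + gam\<^sup>2 * (real d)\<^sup>2 * (Cf + b * CH)\<^sup>2"
    proof (rule client[OF X_cvx Xcl X_ne xkX ystar(1)])
      show "xc k i 1 = x k" using FISM_init k1 i by blast
      show "\<forall>j\<in>{1..I i}. xc k i (j + 1) = proj X (xc k i j - gam *\<^sub>R g k i j - (gam * b) *\<^sub>R Hs k)"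
        using FISM_step k1 i unfolding gam_def b_def lam_def by simp
      show "\<forall>j\<in>{1..I i}. g k i j \<in> subdiff (f i j) (xc k i j)" using FISM_g k1 i by blast
      show "\<forall>j\<in>{1..I i}. \<forall>u\<in>X. \<forall>s\<in>subdiff (f i j) u. norm s \<le> Cf" using Cf_bd i by blast
      show "\<forall>j\<in>{1..I i}. \<forall>u\<in>X. \<forall>v\<in>X. \<bar>f i j u - f i j v\<bar> \<le> Cf * norm (u - v)" using Cf_bd i by blast
    qed (use Hsn Qle gam0 b0 Cf_pos CH_pos in auto)
    thus "(norm (xc k i (I i + 1) - y))\<^sup>2
      \<le> r - 2 * gam * A i - 2 * gam * b * real (I i) * Q + gam\<^sup>2 * (real (I i))\<^sup>2 * D\<^sup>2"
      unfolding r_def A_def D_def by simp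
  qed
  have xk1: "x (k + 1) = (1 / real S) *\<^sub>R (\<Sum>i=1..S. xc k i (I i + 1))" using FISM_avg k1 by blast
  have sumA: "(\<Sum>i=1..S. A i) = F (x k) - F y" unfolding A_def F_def by (simp add: sum_subtractf)
  have sumI: "(\<Sum>i=1..S. real (I i)) = real m" unfolding m_def by simp
  have sumI2: "(\<Sum>i=1..S. (real (I i))\<^sup>2) \<le> (real m)\<^sup>2"
  proof -
    have "(\<Sum>i=1..S. (real (I i))\<^sup>2) \<le> (\<Sum>i=1..S. real (I i) * real m)"
    proof (intro sum_mono)
      fix i assume i: "i \<in> {1..S}"
      have "I i \<le> m" unfolding m_def using i by (intro member_le_sum) auto
      thus "(real (I i))\<^sup>2 \<le> real (I i) * real m" unfolding power2_eq_square
        by (intro mult_left_mono) auto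
    qed
    also have "\<dots> = (real m)\<^sup>2" using sumI by (simp add: sum_distrib_right[symmetric] power2_eq_square)
    finally show ?thesis .
  qed
  have avg: "(norm (x (k + 1) - y))\<^sup>2 \<le> (\<Sum>i=1..S. (norm (xc k i (I i + 1) - y))\<^sup>2) / real S"
    unfolding xk1 using avg_sq[OF S_pos] by blast
  have "(\<Sum>i=1..S. (norm (xc k i (I i + 1) - y))\<^sup>2)
      \<le> (\<Sum>i=1..S. r - 2 * gam * A i - 2 * gam * b * real (I i) * Q + gam\<^sup>2 * (real (I i))\<^sup>2 * D\<^sup>2)"
    using client_i by (intro sum_mono) auto
  also have "\<dots> = real S * r - 2 * gam * (\<Sum>i=1..S. A i) - 2 * gam * b * Q * (\<Sum>i=1..S. real (I i))
      + gam\<^sup>2 * D\<^sup>2 * (\<Sum>i=1..S. (real (I i))\<^sup>2)"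
    by (simp add: sum.distrib sum_subtractf sum_distrib_left sum_distrib_right algebra_simps)
  also have "\<dots> = real S * r - 2 * gam * (F (x k) - F y) - 2 * gam * lam * Q
      + gam\<^sup>2 * D\<^sup>2 * (\<Sum>i=1..S. (real (I i))\<^sup>2)"
    using sumA sumI m1 unfolding b_def by simp
  also have "\<dots> \<le> real S * r - 2 * gam * (F (x k) - F y) - 2 * gam * lam * Q + gam\<^sup>2 * D\<^sup>2 * (real m)\<^sup>2"
    using sumI2 by (intro add_left_mono mult_left_mono) auto
  also have "\<dots> \<le> real S * r - gam * lam * muH * r + gam\<^sup>2 * D\<^sup>2 * (real m)\<^sup>2"
  proof -
    have "F y + lam * H y \<le> F (x k) + lam * H (x k)" using ystar xkX by blast
    hence "0 \<le> 2 * gam * ((F (x k) + lam * H (x k)) - (F y + lam * H y))" using gam0 by simp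
    thus ?thesis unfolding Q_def by (simp add: algebra_simps)
  qed
  finally have sum_le: "(\<Sum>i=1..S. (norm (xc k i (I i + 1) - y))\<^sup>2)
      \<le> real S * r - gam * lam * muH * r + gam\<^sup>2 * D\<^sup>2 * (real m)\<^sup>2" .
  define a where "a = gam * lam * muH / (2 * real m)"
  have a0: "a > 0" unfolding a_def using gam0 lam0 muH_pos m1 by simp
  have a1: "a \<le> 1" unfolding a_def using step_bd k1 m1 unfolding gam_def lam_def by simp
  have r0: "r \<ge> 0" unfolding r_def by simp
  have T1: "(norm (x (k + 1) - y))\<^sup>2 \<le> (1 - 2 * a) * r + gam\<^sup>2 * D\<^sup>2 * (real m)\<^sup>2"
  proof -
    have "(norm (x (k + 1) - y))\<^sup>2 \<le> (real S * r - gam * lam * muH * r + gam\<^sup>2 * D\<^sup>2 * (real m)\<^sup>2) / real S"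
      using avg sum_le S1 by (meson divide_right_mono order_trans of_nat_0_le_iff)
    also have "\<dots> = r - (gam * lam * muH / real S) * r + gam\<^sup>2 * D\<^sup>2 * (real m)\<^sup>2 / real S"
      using S1 by (simp add: field_simps)
    also have "\<dots> \<le> r - 2 * a * r + gam\<^sup>2 * D\<^sup>2 * (real m)\<^sup>2"
    proof -
      have "2 * a \<le> gam * lam * muH / real S" unfolding a_def
        using mS S1 gam0 lam0 muH_pos by (simp add: frac_le)
      hence "2 * a * r \<le> (gam * lam * muH / real S) * r" using r0 by (rule mult_right_mono)
      moreover have "gam\<^sup>2 * D\<^sup>2 * (real m)\<^sup>2 / real S \<le> gam\<^sup>2 * D\<^sup>2 * (real m)\<^sup>2"
        using divide_left_mono[OF S1, of "gam\<^sup>2 * D\<^sup>2 * (real m)\<^sup>2"] S1 by simp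
      ultimately show ?thesis by linarith
    qed
    finally show ?thesis by (simp add: algebra_simps)
  qed
  define dd where "dd = norm (y - y')"
  define w where "w = (lam' - lam) * CH / (lam * muH)"
  have dd0: "dd \<ge> 0" unfolding dd_def by simp
  have ddw: "dd\<^sup>2 \<le> w\<^sup>2"
  proof -
    have Fc: "\<And>u v. \<forall>t. 0 \<le> t \<and> t \<le> 1 \<longrightarrow> F (t *\<^sub>R u + (1 - t) *\<^sub>R v) \<le> t * F u + (1 - t) * F v"
      unfolding F_def using F_conv[OF f_conv] by blast
    have g1: "F y + lam * H y + lam * muH / 2 * dd\<^sup>2 \<le> F y' + lam * H y'"
      using phi_growth[OF X_cvx ystar(1) ystar'(1) _ _ H_sc Fc ystar(2)] lam0 muH_pos
      unfolding dd_def by (simp add: norm_minus_commute)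
    have g2: "F y' + lam' * H y' + lam' * muH / 2 * dd\<^sup>2 \<le> F y + lam' * H y"
      using phi_growth[OF X_cvx ystar'(1) ystar(1) _ _ H_sc Fc ystar'(2)] lam'0 muH_pos
      unfolding dd_def by simp
    have "(lam + lam') * muH / 2 * dd\<^sup>2 \<le> (lam' - lam) * (H y - H y')"
    proof -
      have e1: "(lam + lam') * muH / 2 * dd\<^sup>2 = lam * muH / 2 * dd\<^sup>2 + lam' * muH / 2 * dd\<^sup>2"
        by (simp add: ring_distribs add_divide_distrib)
      have e2: "(lam' - lam) * (H y - H y') = lam' * H y - lam' * H y' - lam * H y + lam * H y'"
        by (simp add: algebra_simps)
      show ?thesis unfolding e1 e2 using g1 g2 by linarith
    qed
    note f1 = this
    have f2: "lam * muH * dd\<^sup>2 \<le> (lam + lam') * muH / 2 * dd\<^sup>2"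
      using lamlam' muH_pos by (intro mult_right_mono) auto
    have f3: "(lam' - lam) * (H y - H y') \<le> (lam' - lam) * (CH * dd)"
    proof -
      have "\<bar>H y - H y'\<bar> \<le> CH * dd" using CH_bd ystar(1) ystar'(1) unfolding dd_def by blast
      thus ?thesis using lamlam' by (intro mult_left_mono) auto
    qed
    have "lam * muH * dd\<^sup>2 \<le> (lam' - lam) * (CH * dd)" using f1 f2 f3 by linarith
    hence "(lam * muH) * dd * dd \<le> ((lam' - lam) * CH) * dd"
      by (simp add: power2_eq_square algebra_simps)
    hence "dd \<le> w"
    proof (cases "dd = 0")
      case True thus ?thesis unfolding w_def using lamlam' CH_pos lam0 muH_pos by simp
    next
      case False
      hence "(lam * muH) * dd \<le> (lam' - lam) * CH" using dd0
        using \<open>(lam * muH) * dd * dd \<le> ((lam' - lam) * CH) * dd\<close> by simp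
      thus ?thesis unfolding w_def using lam0 muH_pos by (simp add: field_simps)
    qed
    thus ?thesis using dd0 by (intro power_mono) auto
  qed
  have w2: "w\<^sup>2 = CH\<^sup>2 / muH\<^sup>2 * (1 - lam' / lam)\<^sup>2"
  proof -
    have "w = (CH / muH) * (lam' / lam - 1)" unfolding w_def using lam0 muH_pos by (simp add: field_simps)
    hence "w\<^sup>2 = (CH / muH)\<^sup>2 * (lam' / lam - 1)\<^sup>2" by (simp only: power_mult_distrib)
    also have "\<dots> = CH\<^sup>2 / muH\<^sup>2 * (1 - lam' / lam)\<^sup>2" by (simp add: power_divide power2_commute)
    finally show ?thesis .
  qed
  define s where "s = (norm (x k - y'))\<^sup>2"
  have s0: "s \<ge> 0" unfolding s_def by simp
  have rs: "r \<le> (1 + a) * s + (1 + 1 / a) * dd\<^sup>2"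
  proof -
    have "norm (x k - y) \<le> norm (x k - y') + dd" unfolding dd_def
      using norm_triangle_ineq[of "x k - y'" "y' - y"] by (simp add: norm_minus_commute)
    hence "r \<le> (norm (x k - y') + dd)\<^sup>2" unfolding r_def by (intro power_mono) auto
    also have "\<dots> \<le> (1 + a) * (norm (x k - y'))\<^sup>2 + (1 + 1 / a) * dd\<^sup>2" by (rule sq_split[OF a0])
    finally show ?thesis unfolding s_def .
  qed
  have comb: "(1 - 2 * a) * r \<le> (1 - a) * s + (2 / a) * dd\<^sup>2"
  proof (cases "1 - 2 * a \<le> 0")
    case True
    hence "(1 - 2 * a) * r \<le> 0" using r0 by (simp add: mult_nonpos_nonneg)
    moreover have "0 \<le> (1 - a) * s + (2 / a) * dd\<^sup>2" using a0 a1 s0 by simp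
    ultimately show ?thesis by linarith
  next
    case False
    hence "(1 - 2 * a) * r \<le> (1 - 2 * a) * ((1 + a) * s + (1 + 1 / a) * dd\<^sup>2)"
      using rs by (intro mult_left_mono) auto
    also have "\<dots> = ((1 - 2 * a) * (1 + a)) * s + ((1 - 2 * a) * (1 + 1 / a)) * dd\<^sup>2"
      by (metis distrib_left mult.assoc)
    also have "\<dots> \<le> (1 - a) * s + (2 / a) * dd\<^sup>2"
    proof -
      have "(1 - 2 * a) * (1 + a) \<le> 1 - a" using a0 by (simp add: algebra_simps)
      hence e1: "((1 - 2 * a) * (1 + a)) * s \<le> (1 - a) * s" using s0 by (rule mult_right_mono)
      have "(1 - 2 * a) * (1 + 1 / a) \<le> 1 + 1 / a" using mult_right_mono[of "1 - 2 * a" 1 "1 + 1 / a"] a0 by simp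
      also have "\<dots> \<le> 2 / a" using a0 a1 by (simp add: field_simps)
      finally have "((1 - 2 * a) * (1 + 1 / a)) * dd\<^sup>2 \<le> (2 / a) * dd\<^sup>2" by (rule mult_right_mono) simp
      thus ?thesis using e1 by linarith
    qed
    finally show ?thesis .
  qed
  have term2: "(2 / a) * dd\<^sup>2 \<le> 4 * real m * CH\<^sup>2 / (gam * lam * muH ^ 3) * (1 - lam' / lam)\<^sup>2"
  proof -
    have "(2 / a) * dd\<^sup>2 \<le> (2 / a) * w\<^sup>2" using ddw a0 by (intro mult_left_mono) auto
    also have "\<dots> = 4 * real m * CH\<^sup>2 / (gam * lam * muH ^ 3) * (1 - lam' / lam)\<^sup>2"
      unfolding w2 a_def using gam0 lam0 muH_pos m1 by (simp add: field_simps power2_eq_square power3_eq_cube)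
    finally show ?thesis .
  qed
  have term3: "gam\<^sup>2 * D\<^sup>2 * (real m)\<^sup>2 \<le> gam\<^sup>2 * (4 * real m ^ 3 * (Cf\<^sup>2 + 2 * (lambda 1)\<^sup>2 * CH\<^sup>2 / (real m)\<^sup>2)
                          + 2 * Cf * (real m)\<^sup>2 * (Cf + lambda 1 * CH / real m))"
  proof -
    define D1 where "D1 = Cf + lambda 1 * CH / real m"
    have "b * CH \<le> lambda 1 * CH / real m" unfolding b_def using lam1 CH_pos m1
      by (simp add: divide_right_mono mult_right_mono)
    hence "D \<le> D1" unfolding D_def D1_def by simp
    hence "D\<^sup>2 * (real m)\<^sup>2 \<le> D1\<^sup>2 * (real m)\<^sup>2" using D0 by (intro mult_right_mono power_mono) auto
    also have "\<dots> \<le> 4 * real m ^ 3 * (Cf\<^sup>2 + 2 * (lambda 1)\<^sup>2 * CH\<^sup>2 / (real m)\<^sup>2)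
                          + 2 * Cf * (real m)\<^sup>2 * (Cf + lambda 1 * CH / real m)"
    proof -
      have l10: "lambda 1 > 0" using lambda_pos by simp
      have e: "D1\<^sup>2 * (real m)\<^sup>2 = (real m)\<^sup>2 * Cf\<^sup>2 + 2 * real m * Cf * lambda 1 * CH + (lambda 1)\<^sup>2 * CH\<^sup>2"
        unfolding D1_def using m1 by (simp add: field_simps power2_eq_square)
      have e2: "4 * real m ^ 3 * (Cf\<^sup>2 + 2 * (lambda 1)\<^sup>2 * CH\<^sup>2 / (real m)\<^sup>2)
                          + 2 * Cf * (real m)\<^sup>2 * (Cf + lambda 1 * CH / real m)
             = 4 * real m ^ 3 * Cf\<^sup>2 + 8 * real m * (lambda 1)\<^sup>2 * CH\<^sup>2 + 2 * Cf\<^sup>2 * (real m)\<^sup>2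
               + 2 * real m * Cf * lambda 1 * CH"
        using m1 by (simp add: field_simps power2_eq_square power3_eq_cube)
      have p1: "(real m)\<^sup>2 * Cf\<^sup>2 \<le> 2 * Cf\<^sup>2 * (real m)\<^sup>2" by simp
      have p2: "(lambda 1)\<^sup>2 * CH\<^sup>2 \<le> 8 * real m * (lambda 1)\<^sup>2 * CH\<^sup>2"
        using mult_right_mono[of 1 "8 * real m" "(lambda 1)\<^sup>2 * CH\<^sup>2"] m1 by (simp add: mult.assoc)
      have p3: "0 \<le> 4 * real m ^ 3 * Cf\<^sup>2" using m1 by simp
      show ?thesis unfolding e e2 using p1 p2 p3 by linarith
    qed
    finally show ?thesis using gam0 by (simp add: mult.assoc mult_left_mono)
  qed
  have "(norm (x (k + 1) - xstar k))\<^sup>2 \<le> (1 - a) * s + (2 / a) * dd\<^sup>2 + gam\<^sup>2 * D\<^sup>2 * (real m)\<^sup>2"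
    using T1 comb unfolding y_def by linarith
  also have "\<dots> \<le> (1 - a) * s + 4 * real m * CH\<^sup>2 / (gam * lam * muH ^ 3) * (1 - lam' / lam)\<^sup>2
      + gam\<^sup>2 * (4 * real m ^ 3 * (Cf\<^sup>2 + 2 * (lambda 1)\<^sup>2 * CH\<^sup>2 / (real m)\<^sup>2)
                          + 2 * Cf * (real m)\<^sup>2 * (Cf + lambda 1 * CH / real m))"
    using term2 term3 by linarith
  finally show "(norm (x (k + 1) - xstar k))\<^sup>2
       \<le> (1 - gamma k * lambda k * muH / (2 * real m)) * (norm (x k - xstar (k - 1)))\<^sup>2
         + 4 * real m * CH\<^sup>2 / (gamma k * lambda k * muH ^ 3) * (1 - lambda (k - 1) / lambda k)\<^sup>2
         + (gamma k)\<^sup>2 * (4 * real m ^ 3 * (Cf\<^sup>2 + 2 * (lambda 1)\<^sup>2 * CH\<^sup>2 / (real m)\<^sup>2)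
                          + 2 * Cf * (real m)\<^sup>2 * (Cf + lambda 1 * CH / real m))"
    unfolding a_def s_def gam_def lam_def lam'_def y'_def by simp
qed

end
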